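(* Let $k,\lambda,\varepsilon>0$. For each $n\ge2$ let weights $\alpha_{1,n},\dots,\alpha_{n,n}>0$ with $\sum_{i=1}^n\alpha_{i,n}=1$ be given, and let $\alpha_{\min,n}$, $\alpha_{\max,n}$ be the smallest and largest of them. Let $P_n$ be the probability on $[0,\infty)^n$ with density $\lambda^n e^{-\lambda\|x\|_1}$, where $\|x\|_1=\sum_i x_i$. Then there exists $N=N(k,\varepsilon)$ such that for every $n\ge N$, $$P_n\left\{(1-\varepsilon)e^{-n\alpha_{\max,n}\gamma}<\frac{\prod_{i=1}^n x_i^{\alpha_{i,n}}}{\sum_{i=1}^n\alpha_{i,n}x_i}<(1+\varepsilon)e^{-n\alpha_{\min,n}\gamma}\right\}\ge1-\frac1{n^k}.$$
   Context: $\gamma$ denotes Euler's constant. *)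

theory Defs
  imports "HOL-Analysis.Analysis"
begin

definition P_exp :: "real \<Rightarrow> nat \<Rightarrow> (nat \<Rightarrow> real) measure" where
  "P_exp lam n = density (PiM {..<n} (\<lambda>_. lborel))
     (\<lambda>x. ennreal (if (\<forall>i<n. x i \<ge> 0) then lam ^ n * exp (- lam * (\<Sum>i<n. x i)) else 0))"

end

theory Submission
  imports Defs "HOL-Real_Asymp.Real_Asymp"
begin


lemma gamma_nn1:
  fixes p :: real assumes p: "p > -1"
  shows "(\<integral>\<^sup>+t. ennreal (if 0 \<le> t then exp (- t) * t powr p else 0) \<partial>lborel) = ennreal (Gamma (p+1))"
proof -
  have "((\<lambda>t. t powr (p + 1 - 1) / exp t) has_integral Gamma (p+1)) {0..}"
    using Gamma_integral_real[of "p+1"] p by simp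
  hence "((\<lambda>t. exp (- t) * t powr p) has_integral Gamma (p+1)) {0..}"
    by (simp add: exp_minus field_simps)
  hence "((\<lambda>t. if t \<in> {0..} then exp (- t) * t powr p else 0) has_integral Gamma (p+1)) UNIV"
    by (subst has_integral_restrict_UNIV)
  hence "((\<lambda>t. if 0 \<le> t then exp (- t) * t powr p else 0) has_integral Gamma (p+1)) UNIV"
    by simp
  thus ?thesis
    by (intro nn_integral_has_integral_lborel) auto
qed

lemma gamma_nn:
  fixes p lam :: real assumes p: "p > -1" and lam: "lam > 0"
  shows "(\<integral>\<^sup>+t. ennreal (if 0 \<le> t then lam * exp (- lam * t) else 0) * ennreal (t powr p) \<partial>lborel)
     = ennreal (Gamma (p+1) / lam powr p)"
proof -
  define f where "f t = ennreal (if 0 \<le> t then lam * exp (- lam * t) else 0) * ennreal (t powr p)" for t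
  have [measurable]: "f \<in> borel_measurable borel" unfolding f_def by measurable
  have "(\<integral>\<^sup>+t. f t \<partial>lborel) = \<bar>1/lam\<bar> * (\<integral>\<^sup>+x. f (0 + (1/lam) * x) \<partial>lborel)"
    by (rule nn_integral_real_affine) (use lam in auto)
  also have "(\<lambda>x. f (0 + (1/lam) * x)) = (\<lambda>x. ennreal (lam / lam powr p) * ennreal (if 0 \<le> x then exp (- x) * x powr p else 0))"
  proof
    fix x show "f (0 + (1/lam) * x) = ennreal (lam / lam powr p) * ennreal (if 0 \<le> x then exp (- x) * x powr p else 0)"
      using lam by (auto simp: f_def ennreal_mult'[symmetric] powr_divide zero_le_divide_iff field_simps)
  qed
  also have "\<bar>1/lam\<bar> * (\<integral>\<^sup>+x. ennreal (lam / lam powr p) * ennreal (if 0 \<le> x then exp (- x) * x powr p else 0) \<partial>lborel)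
      = ennreal (1/lam) * (ennreal (lam / lam powr p) * ennreal (Gamma (p+1)))"
    using lam by (subst nn_integral_cmult) (auto simp: gamma_nn1[OF p])
  also have "\<dots> = ennreal (Gamma (p+1) / lam powr p)"
    using lam p by (simp add: ennreal_mult'[symmetric] field_simps)
  finally show ?thesis unfolding f_def .
qed


definition edens :: "real \<Rightarrow> real \<Rightarrow> ennreal" where
  "edens lam t = ennreal (if 0 \<le> t then lam * exp (- lam * t) else 0)"

lemma edens_meas[measurable]: "edens lam \<in> borel_measurable borel"
  unfolding edens_def by measurable

lemma dens_prod:
  assumes lam: "lam > 0"
  shows "ennreal (if (\<forall>i<n. x i \<ge> 0) then lam ^ n * exp (- lam * (\<Sum>i<n. x i)) else 0)
     = (\<Prod>i<n. edens lam (x i))"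
proof (cases "\<forall>i<n. x i \<ge> 0")
  case True
  have "lam ^ n * exp (- lam * (\<Sum>i<n. x i)) = (\<Prod>i<n. lam * exp (- lam * x i))"
    by (simp add: prod.distrib exp_sum[symmetric] sum_distrib_left sum_negf)
  thus ?thesis using True lam
    by (simp add: edens_def prod_ennreal[symmetric])
next
  case False
  then obtain i where "i < n" "x i < 0" by auto
  hence "(\<Prod>i<n. edens lam (x i)) = 0"
    by (intro prod_zero) (auto simp: edens_def intro!: bexI[of _ i])
  thus ?thesis by (subst if_not_P[OF False]) simp
qed

lemma space_P_exp: "space (P_exp lam n) = space (PiM {..<n} (\<lambda>_. lborel))"
  unfolding P_exp_def by simp
lemma sets_P_exp[measurable_cong]: "sets (P_exp lam n) = sets (PiM {..<n} (\<lambda>_. lborel))"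
  unfolding P_exp_def by simp

lemma prod_integral:
  assumes lam: "lam > 0" and f[measurable]: "\<And>i. f i \<in> borel_measurable borel"
  shows "(\<integral>\<^sup>+x. (\<Prod>i<n. f i (x i)) \<partial>P_exp lam n) = (\<Prod>i<n. \<integral>\<^sup>+t. edens lam t * f i t \<partial>lborel)"
proof -
  have "(\<integral>\<^sup>+x. (\<Prod>i<n. f i (x i)) \<partial>P_exp lam n)
      = (\<integral>\<^sup>+x. ennreal (if (\<forall>i<n. x i \<ge> 0) then lam ^ n * exp (- lam * (\<Sum>i<n. x i)) else 0) * (\<Prod>i<n. f i (x i)) \<partial>PiM {..<n} (\<lambda>_. lborel))"
    unfolding P_exp_def by (rule nn_integral_density) measurable
  also have "\<dots> = (\<integral>\<^sup>+x. (\<Prod>i<n. edens lam (x i) * f i (x i)) \<partial>PiM {..<n} (\<lambda>_. lborel))"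
    by (simp add: dens_prod[OF lam] prod.distrib)
  also have "\<dots> = (\<Prod>i<n. \<integral>\<^sup>+t. edens lam t * f i t \<partial>lborel)"
    by (rule product_sigma_finite.product_nn_integral_prod) (auto simp: product_sigma_finite_def lborel.sigma_finite_measure_axioms)
  finally show ?thesis .
qed



lemma int_exp:
  assumes lam: "lam > 0" and a: "a < lam"
  shows "(\<integral>\<^sup>+t. edens lam t * ennreal (exp (a * t)) \<partial>lborel) = ennreal (lam / (lam - a))"
proof -
  have "((\<lambda>x. exp (- (lam - a) * x)) has_integral exp (- (lam - a) * 0) / (lam - a)) {0..}"
    using a by (intro has_integral_exp_minus_to_infinity) auto
  hence "((\<lambda>x. lam * exp (- (lam - a) * x)) has_integral lam * (1 / (lam - a))) {0..}"
    by (intro has_integral_mult_right) simp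
  hence "((\<lambda>x. if x \<in> {0..} then lam * exp (- (lam - a) * x) else 0) has_integral lam / (lam - a)) UNIV"
    by (subst has_integral_restrict_UNIV) simp
  hence "((\<lambda>x. if 0 \<le> x then lam * exp (- (lam - a) * x) else 0) has_integral lam / (lam - a)) UNIV"
    by simp
  hence "(\<integral>\<^sup>+t. ennreal (if 0 \<le> t then lam * exp (- (lam - a) * t) else 0) \<partial>lborel) = ennreal (lam / (lam - a))"
    using lam by (intro nn_integral_has_integral_lborel) auto
  moreover have "\<And>t. edens lam t * ennreal (exp (a * t)) = ennreal (if 0 \<le> t then lam * exp (- (lam - a) * t) else 0)"
    using lam by (auto simp: edens_def ennreal_mult'[symmetric] exp_add[symmetric] algebra_simps)
  ultimately show ?thesis by simp
qed

lemma int_one: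
  assumes lam: "lam > 0"
  shows "(\<integral>\<^sup>+t. edens lam t * 1 \<partial>lborel) = 1"
  using int_exp[OF lam, of 0] lam by simp

lemma int_zero:
  assumes lam: "lam > 0"
  shows "(\<integral>\<^sup>+t. edens lam t * indicator {..0} t \<partial>lborel) = 0"
proof -
  have "\<And>t. edens lam t * indicator {..0} t = ennreal lam * indicator {0} t"
    by (auto simp: edens_def indicator_def)
  hence "(\<integral>\<^sup>+t. edens lam t * indicator {..0} t \<partial>lborel) = ennreal lam * emeasure lborel {0}"
    by (simp add: nn_integral_cmult_indicator)
  thus ?thesis by simp
qed

lemma markov:
  assumes F[measurable]: "F \<in> borel_measurable M" and a: "a > 0"
  shows "emeasure M {x\<in>space M. ennreal a \<le> F x} \<le> ennreal (1/a) * (\<integral>\<^sup>+x. F x \<partial>M)"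
proof -
  let ?S = "{x\<in>space M. ennreal a \<le> F x}"
  have "ennreal a * emeasure M ?S = (\<integral>\<^sup>+x. ennreal a * indicator ?S x \<partial>M)"
    by (simp add: nn_integral_cmult_indicator)
  also have "\<dots> \<le> (\<integral>\<^sup>+x. F x \<partial>M)"
    by (intro nn_integral_mono) (auto simp: indicator_def)
  finally have "ennreal (1/a) * (ennreal a * emeasure M ?S) \<le> ennreal (1/a) * (\<integral>\<^sup>+x. F x \<partial>M)"
    by (intro mult_left_mono) auto
  moreover have "ennreal (1/a) * (ennreal a * emeasure M ?S) = emeasure M ?S"
    using a by (simp add: mult.assoc[symmetric] ennreal_mult'[symmetric])
  ultimately show ?thesis by simp
qed

lemma int_pow:
  assumes p: "p > -1" and lam: "lam > 0"
  shows "(\<integral>\<^sup>+t. edens lam t * ennreal (t powr p) \<partial>lborel) = ennreal (Gamma (p+1) / lam powr p)"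
  using gamma_nn[OF p lam] unfolding edens_def .



lemma emeasure_P_space:
  assumes lam: "lam > 0"
  shows "emeasure (P_exp lam n) (space (P_exp lam n)) = 1"
proof -
  have "emeasure (P_exp lam n) (space (P_exp lam n)) = (\<integral>\<^sup>+x. (\<Prod>i<n. (\<lambda>_ t. 1) i (x i)) \<partial>P_exp lam n)"
    by simp
  also have "\<dots> = (\<Prod>i<n. \<integral>\<^sup>+t. edens lam t * 1 \<partial>lborel)"
    by (rule prod_integral[OF lam]) simp
  also have "\<dots> = 1" using int_one[OF lam] by simp
  finally show ?thesis .
qed

lemma fin_P: "lam > 0 \<Longrightarrow> finite_measure (P_exp lam n)"
  by (rule finite_measureI) (simp add: emeasure_P_space)

lemma markov_prod:
  assumes lam: "lam > 0" and f[measurable]: "\<And>i. f i \<in> borel_measurable borel" and a: "a > 0"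
    and r: "\<And>i. i < n \<Longrightarrow> (\<integral>\<^sup>+t. edens lam t * f i t \<partial>lborel) = ennreal (r i)"
    and rpos: "\<And>i. i < n \<Longrightarrow> r i \<ge> 0"
  shows "measure (P_exp lam n) {x\<in>space (P_exp lam n). ennreal a \<le> (\<Prod>i<n. f i (x i))} \<le> (\<Prod>i<n. r i) / a"
proof -
  have meas: "(\<lambda>x. \<Prod>i<n. f i (x i)) \<in> borel_measurable (P_exp lam n)"
    by measurable
  have "emeasure (P_exp lam n) {x\<in>space (P_exp lam n). ennreal a \<le> (\<Prod>i<n. f i (x i))}
     \<le> ennreal (1/a) * (\<integral>\<^sup>+x. (\<Prod>i<n. f i (x i)) \<partial>P_exp lam n)"
    by (rule markov[OF meas a])
  also have "(\<integral>\<^sup>+x. (\<Prod>i<n. f i (x i)) \<partial>P_exp lam n) = (\<Prod>i<n. ennreal (r i))"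
    by (simp add: prod_integral[OF lam] r)
  also have "\<dots> = ennreal (\<Prod>i<n. r i)"
    using rpos by (intro prod_ennreal) auto
  also have "ennreal (1/a) * ennreal (\<Prod>i<n. r i) = ennreal ((\<Prod>i<n. r i) / a)"
    using a rpos by (simp add: ennreal_mult'[symmetric] prod_nonneg)
  finally show ?thesis unfolding measure_def
    by (intro enn2real_leI) (use a rpos in \<open>auto intro!: divide_nonneg_pos prod_nonneg\<close>)
qed

lemma null_event:
  assumes lam: "lam > 0"
  shows "measure (P_exp lam n) {x\<in>space (P_exp lam n). \<exists>i<n. x i \<le> 0} = 0"
proof -
  have sub: "{x\<in>space (P_exp lam n). \<exists>i<n. x i \<le> 0} \<subseteq>
        (\<Union>i<n. {x\<in>space (P_exp lam n). ennreal 1 \<le> (\<Prod>j<n. (\<lambda>j t. if j = i then indicator {..0} t else 1) j (x j))})"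
  proof
    fix x assume "x \<in> {x\<in>space (P_exp lam n). \<exists>i<n. x i \<le> 0}"
    then obtain i where i: "i < n" "x i \<le> 0" "x \<in> space (P_exp lam n)" by auto
    have "(\<Prod>j<n. (\<lambda>j t. if j = i then indicator {..0} t else (1::ennreal)) j (x j)) = 1"
      using i by (intro prod.neutral) auto
    thus "x \<in> (\<Union>i<n. {x\<in>space (P_exp lam n). ennreal 1 \<le> (\<Prod>j<n. (\<lambda>j t. if j = i then indicator {..0} t else 1) j (x j))})"
      using i by (auto intro!: bexI[of _ i])
  qed
  have b: "measure (P_exp lam n) {x\<in>space (P_exp lam n). ennreal 1 \<le> (\<Prod>j<n. (\<lambda>j t. if j = i then indicator {..0} t else 1) j (x j))} \<le> 0"
    if "i < n" for i
  proof -
    have "measure (P_exp lam n) {x\<in>space (P_exp lam n). ennreal 1 \<le> (\<Prod>j<n. (\<lambda>j t. if j = i then indicator {..0} t else 1) j (x j))}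
       \<le> (\<Prod>j<n. (if j = i then 0 else 1)) / 1"
      by (rule markov_prod[OF lam]) (use int_one[OF lam] in \<open>auto simp: int_zero[OF lam]\<close>)
    also have "\<dots> = 0" using that by (simp add: prod.delta)
    finally show ?thesis .
  qed
  interpret finite_measure "P_exp lam n" by (rule fin_P[OF lam])
  have "measure (P_exp lam n) {x\<in>space (P_exp lam n). \<exists>i<n. x i \<le> 0}
     \<le> measure (P_exp lam n) (\<Union>i<n. {x\<in>space (P_exp lam n). ennreal 1 \<le> (\<Prod>j<n. (\<lambda>j t. if j = i then indicator {..0} t else 1) j (x j))})"
    by (intro finite_measure_mono[OF sub]) measurable
  also have "\<dots> \<le> (\<Sum>i<n. measure (P_exp lam n) {x\<in>space (P_exp lam n). ennreal 1 \<le> (\<Prod>j<n. (\<lambda>j t. if j = i then indicator {..0} t else 1) j (x j))})"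
    by (intro finite_measure_subadditive_finite) (simp, intro image_subsetI, measurable)
  also have "\<dots> \<le> 0" using b by (intro sum_nonpos) auto
  finally show ?thesis using measure_nonneg[of "P_exp lam n"] by (meson order.antisym)
qed



lemma asym:
  fixes \<kappa> k :: real assumes "\<kappa> > 0" "k > 0"
  shows "eventually (\<lambda>n::nat. 4 * exp (- \<kappa> * real n) \<le> 1 / real n powr k) at_top"
  using assms by real_asymp

lemma small_param:
  fixes f :: "real \<Rightarrow> real"
  assumes "(f has_real_derivative d) (at 0)" "f 0 = 0" "d < m" "r > 0"
  shows "\<exists>s. 0 < s \<and> s \<le> r \<and> f s \<le> m * s"
proof -
  have "((\<lambda>h. (f (0 + h) - f 0) / h) \<longlongrightarrow> d) (at 0)"
    using assms(1) by (simp add: DERIV_def)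
  hence "((\<lambda>h. f h / h) \<longlongrightarrow> d) (at_right 0)"
    using assms(2) by (simp add: filterlim_at_split)
  hence "eventually (\<lambda>h. f h / h < m) (at_right 0)"
    using assms(3) by (intro order_tendstoD) auto
  moreover have "eventually (\<lambda>h. 0 < h \<and> h \<le> r) (at_right (0::real))"
    using assms(4) by (auto simp: eventually_at_right_field intro!: exI[of _ r])
  ultimately have "eventually (\<lambda>h. f h / h < m \<and> 0 < h \<and> h \<le> r) (at_right (0::real))"
    by eventually_elim auto
  from eventually_happens[OF this] obtain h where "f h / h < m" "0 < h" "h \<le> r"
    using trivial_limit_at_right_real by blast
  thus ?thesis by (intro exI[of _ h]) (auto simp: field_simps)
qed



lemma G1:
  fixes \<delta> :: real assumes "\<delta> > 0"
  shows "\<exists>s. 0 < s \<and> s \<le> 1/2 \<and> Gamma (1 + s) \<le> exp ((- euler_mascheroni + \<delta>) * s)"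
proof -
  have "((\<lambda>s. ln_Gamma (1 + s)) has_real_derivative Digamma (1 + 0) * (0 + 1)) (at (0::real))"
    by (intro derivative_eq_intros) auto
  hence d: "((\<lambda>s. ln_Gamma (1 + s)) has_real_derivative - euler_mascheroni) (at (0::real))" by simp
  have "ln_Gamma (1::real) = 0" by (simp add: ln_Gamma_real_pos)
  with small_param[OF d _ _, of "- euler_mascheroni + \<delta>" "1/2"] assms obtain s where
    s: "0 < s" "s \<le> 1/2" "ln_Gamma (1 + s) \<le> (- euler_mascheroni + \<delta>) * s" by auto
  have "Gamma (1 + s) = exp (ln_Gamma (1 + s))"
    using s by (simp add: ln_Gamma_real_pos)
  also have "\<dots> \<le> exp ((- euler_mascheroni + \<delta>) * s)" using s by simp
  finally show ?thesis using s by blast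
qed

lemma G2:
  fixes \<delta> :: real assumes "\<delta> > 0"
  shows "\<exists>s. 0 < s \<and> s \<le> 1/2 \<and> (\<forall>u. 0 \<le> u \<and> u \<le> s \<longrightarrow> Gamma (1 - u) \<le> exp ((euler_mascheroni + \<delta>) * u))"
proof -
  have "((\<lambda>s. ln_Gamma (1 - s)) has_real_derivative Digamma (1 - 0) * (0 - 1)) (at (0::real))"
    by (intro derivative_eq_intros) auto
  hence d: "((\<lambda>s. ln_Gamma (1 - s)) has_real_derivative euler_mascheroni) (at (0::real))" by simp
  have "ln_Gamma (1::real) = 0" by (simp add: ln_Gamma_real_pos)
  with small_param[OF d _ _, of "euler_mascheroni + \<delta>" "1/2"] assms obtain s where
    s: "0 < s" "s \<le> 1/2" "ln_Gamma (1 - s) \<le> (euler_mascheroni + \<delta>) * s" by auto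
  have "Gamma (1 - u) \<le> exp ((euler_mascheroni + \<delta>) * u)" if u: "0 \<le> u" "u \<le> s" for u
  proof -
    define t where "t = u / s"
    have t: "0 \<le> t" "t \<le> 1" using u s by (auto simp: t_def field_simps)
    have cv: "(ln \<circ> Gamma) ((1 - t) *\<^sub>R 1 + t *\<^sub>R (1 - s)) \<le> (1 - t) * (ln \<circ> Gamma) 1 + t * (ln \<circ> Gamma) (1 - s)"
      by (rule convex_onD[OF log_convex_Gamma_real t]) (use s in auto)
    have e: "(1 - t) *\<^sub>R (1::real) + t *\<^sub>R (1 - s) = 1 - u" using s by (simp add: t_def field_simps)
    have "ln (Gamma (1 - s)) = ln_Gamma (1 - s)" using s by (simp add: ln_Gamma_real_pos)
    with cv have "ln (Gamma (1 - u)) \<le> t * ln_Gamma (1 - s)" unfolding e by simp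
    also have "\<dots> \<le> t * ((euler_mascheroni + \<delta>) * s)" using t s by (intro mult_left_mono) auto
    also have "\<dots> = (euler_mascheroni + \<delta>) * u" using s by (simp add: t_def field_simps)
    finally have "ln (Gamma (1 - u)) \<le> (euler_mascheroni + \<delta>) * u" .
    hence "exp (ln (Gamma (1 - u))) \<le> exp ((euler_mascheroni + \<delta>) * u)" by simp
    thus ?thesis using u s by simp
  qed
  thus ?thesis using s by blast
qed

lemma G3:
  fixes \<beta> :: real assumes "0 < \<beta>" "\<beta> < 1"
  shows "\<exists>t. 0 < t \<and> t \<le> 1 \<and> exp (t * \<beta>) / (1 + t) \<le> exp (- ((1 - \<beta>) / 2) * t)"
proof -
  have "((\<lambda>t. t * \<beta> - ln (1 + t)) has_real_derivative 1 * \<beta> - 1 / (1 + 0) * (0 + 1)) (at (0::real))"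
    by (intro derivative_eq_intros) auto
  hence d: "((\<lambda>t. t * \<beta> - ln (1 + t)) has_real_derivative \<beta> - 1) (at (0::real))" by simp
  have m: "\<beta> - 1 < - ((1 - \<beta>) / 2)" using assms(2) by (simp add: field_simps)
  from small_param[OF d _ m, of 1] obtain t where
    t: "0 < t" "t \<le> 1" "t * \<beta> - ln (1 + t) \<le> - ((1 - \<beta>) / 2) * t" by auto
  have "exp (t * \<beta>) / (1 + t) = exp (t * \<beta> - ln (1 + t))" using t by (simp add: exp_diff)
  also have "\<dots> \<le> exp (- ((1 - \<beta>) / 2) * t)" using t by simp
  finally show ?thesis using t by blast
qed

lemma inv_one_minus:
  fixes u \<tau> :: real assumes "0 \<le> u" "u \<le> \<tau>" "\<tau> < 1"
  shows "1 / (1 - u) \<le> exp (u / (1 - \<tau>))"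
proof -
  have "ln (1 / (1 - u)) \<le> 1 / (1 - u) - 1" using assms by (intro ln_le_minus_one) auto
  also have "\<dots> = u / (1 - u)" using assms by (simp add: field_simps)
  also have "\<dots> \<le> u / (1 - \<tau>)" using assms by (intro divide_left_mono) auto
  finally have "exp (ln (1 / (1 - u))) \<le> exp (u / (1 - \<tau>))" by simp
  thus ?thesis using assms by simp
qed

lemma wamgm:
  fixes w y :: "'a \<Rightarrow> real" and c0 z :: real
  assumes "finite I" "\<And>i. i \<in> I \<Longrightarrow> w i \<ge> 0" "\<And>i. i \<in> I \<Longrightarrow> y i > 0" "c0 \<ge> 0" "z > 0"
    "c0 + (\<Sum>i\<in>I. w i) = 1"
  shows "c0 * ln z + (\<Sum>i\<in>I. w i * ln (y i)) \<le> ln (c0 * z + (\<Sum>i\<in>I. w i * y i))"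
proof -
  define T where "T = c0 * z + (\<Sum>i\<in>I. w i * y i)"
  have T: "T > 0"
  proof (cases "c0 > 0")
    case True
    thus ?thesis unfolding T_def using assms by (intro add_pos_nonneg sum_nonneg) (auto intro: mult_nonneg_nonneg less_imp_le)
  next
    case False
    hence "(\<Sum>i\<in>I. w i) > 0" using assms by auto
    then obtain j where j: "j \<in> I" "w j > 0"
      by (metis assms(2) order.strict_iff_not sum_nonpos)
    have "(\<Sum>i\<in>I. w i * y i) > 0"
      using assms j by (intro sum_pos2[of I j]) (auto intro: mult_nonneg_nonneg less_imp_le)
    thus ?thesis unfolding T_def using assms by (intro add_nonneg_pos) auto
  qed
  have a: "c0 * ln (z / T) \<le> c0 * (z / T - 1)"
    using assms T by (intro mult_left_mono ln_le_minus_one) auto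
  have b: "w i * ln (y i / T) \<le> w i * (y i / T - 1)" if "i \<in> I" for i
    using assms T that by (intro mult_left_mono ln_le_minus_one) auto
  have "c0 * ln (z / T) + (\<Sum>i\<in>I. w i * ln (y i / T)) \<le> c0 * (z / T - 1) + (\<Sum>i\<in>I. w i * (y i / T - 1))"
    using a b by (intro add_mono sum_mono) auto
  also have "\<dots> = T / T - (c0 + (\<Sum>i\<in>I. w i))"
  proof -
    have "(\<Sum>i\<in>I. w i * (y i / T - 1)) = (\<Sum>i\<in>I. w i * y i) / T - (\<Sum>i\<in>I. w i)"
      by (simp add: sum_subtractf sum_divide_distrib algebra_simps)
    thus ?thesis using T unfolding T_def by (simp add: field_simps)
  qed
  also have "\<dots> = 0" using T assms by simp
  finally have "c0 * ln (z / T) + (\<Sum>i\<in>I. w i * ln (y i / T)) \<le> 0" .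
  moreover have "c0 * ln (z / T) + (\<Sum>i\<in>I. w i * ln (y i / T)) = c0 * ln z + (\<Sum>i\<in>I. w i * ln (y i)) - ln T"
  proof -
    have "(\<Sum>i\<in>I. w i * ln (y i / T)) = (\<Sum>i\<in>I. w i * ln (y i)) - (\<Sum>i\<in>I. w i) * ln T"
    proof -
      have "(\<Sum>i\<in>I. w i * ln (y i / T)) = (\<Sum>i\<in>I. w i * ln (y i) - w i * ln T)"
      proof (intro sum.cong refl)
        fix i assume "i \<in> I"
        hence "y i > 0" using assms(3) by auto
        thus "w i * ln (y i / T) = w i * ln (y i) - w i * ln T" using T by (simp add: ln_div algebra_simps)
      qed
      thus ?thesis by (simp add: sum_subtractf sum_distrib_right)
    qed
    moreover have "c0 * ln (z / T) = c0 * ln z - c0 * ln T" using assms(5) T by (simp add: ln_div algebra_simps)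
    moreover have "sum w I = 1 - c0" using assms(6) by simp
    ultimately show ?thesis by (simp add: algebra_simps)
  qed
  ultimately show ?thesis unfolding T_def by simp
qed



lemma prod_powr_pos:
  fixes n :: nat
  assumes "\<And>i. i < n \<Longrightarrow> x i > (0::real)"
  shows "(\<Prod>i<n. x i powr a i) = exp (\<Sum>i<n. a i * ln (x i))"
proof -
  have "(\<Prod>i<n. x i powr a i) = (\<Prod>i<n. exp (a i * ln (x i)))"
  proof (intro prod.cong refl)
    fix i assume "i \<in> {..<n}"
    hence "x i > 0" using assms by auto
    thus "x i powr a i = exp (a i * ln (x i))" by (simp add: powr_def)
  qed
  also have "\<dots> = exp (\<Sum>i<n. a i * ln (x i))" by (rule exp_sum[symmetric]) simp
  finally show ?thesis .
qed

lemma upper_pt: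
  fixes x \<alpha> :: "nat \<Rightarrow> real"
  assumes n: "n > 0" and ap: "\<And>i. i < n \<Longrightarrow> \<alpha> i > 0" and xp: "\<And>i. i < n \<Longrightarrow> x i > 0"
    and s1: "(\<Sum>i<n. \<alpha> i) = 1"
  shows "(\<Prod>i<n. x i powr \<alpha> i) / (\<Sum>i<n. \<alpha> i * x i)
     \<le> exp (real n * Min (\<alpha> ` {..<n}) * ((\<Sum>i<n. ln (x i)) / n - ln ((\<Sum>i<n. x i) / n)))"
proof -
  define c where "c = real n * Min (\<alpha> ` {..<n})"
  define w where "w i = \<alpha> i - c / n" for i
  define z where "z = (\<Sum>i<n. x i) / n"
  have mn: "Min (\<alpha> ` {..<n}) \<le> \<alpha> i" if "i < n" for i using that by (intro Min_le) auto
  have mpos: "Min (\<alpha> ` {..<n}) > 0" using n ap by (subst Min_gr_iff) auto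
  have c0: "c \<ge> 0" unfolding c_def using mpos by simp
  have w0: "w i \<ge> 0" if "i < n" for i using mn[OF that] n unfolding w_def c_def by simp
  have zp: "z > 0" unfolding z_def using n xp by (intro divide_pos_pos sum_pos) auto
  have sw: "(\<Sum>i<n. w i) = 1 - c" unfolding w_def using n s1 by (simp add: sum_subtractf)
  have am: "c * ln z + (\<Sum>i<n. w i * ln (x i)) \<le> ln (c * z + (\<Sum>i<n. w i * x i))"
    by (rule wamgm) (use c0 w0 xp zp sw in auto)
  have D: "c * z + (\<Sum>i<n. w i * x i) = (\<Sum>i<n. \<alpha> i * x i)"
    unfolding w_def z_def using n by (simp add: algebra_simps sum_subtractf sum_distrib_left sum_divide_distrib)
  have Dp: "(\<Sum>i<n. \<alpha> i * x i) > 0" using n ap xp by (intro sum_pos) auto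
  have W: "(\<Sum>i<n. \<alpha> i * ln (x i)) = (\<Sum>i<n. w i * ln (x i)) + c * ((\<Sum>i<n. ln (x i)) / n)"
    unfolding w_def using n by (simp add: algebra_simps sum_subtractf sum_distrib_left sum_divide_distrib)
  have "(\<Prod>i<n. x i powr \<alpha> i) / (\<Sum>i<n. \<alpha> i * x i) = exp ((\<Sum>i<n. \<alpha> i * ln (x i)) - ln (\<Sum>i<n. \<alpha> i * x i))"
    using Dp by (simp add: prod_powr_pos[OF xp] exp_diff)
  also have "\<dots> \<le> exp (c * ((\<Sum>i<n. ln (x i)) / n - ln z))"
    using am unfolding D W by (simp add: algebra_simps)
  finally show ?thesis unfolding c_def z_def .
qed



lemma pt_good:
  fixes x \<alpha> :: "nat \<Rightarrow> real" and n :: nat and lam e \<epsilon> \<sigma>1 \<tau>2 t s :: real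
  assumes n: "n > 0" and ap: "\<And>i. i < n \<Longrightarrow> \<alpha> i > 0" and xp: "\<And>i. i < n \<Longrightarrow> x i > 0"
    and s1: "(\<Sum>i<n. \<alpha> i) = 1" and lam: "lam > 0"
    and e: "0 < e" "e \<le> 1/2" "e \<le> \<epsilon>"
    and pos: "\<sigma>1 > 0" "\<tau>2 > 0" "t > 0" "s > 0"
    and h1: "(\<Prod>i<n. x i powr \<sigma>1) < exp (n * \<sigma>1 * (ln (1+e)/2 - euler_mascheroni - ln lam))"
    and h2: "(\<Prod>i<n. exp (- (\<tau>2 * lam) * x i)) < exp (- \<tau>2 * exp (- ln (1+e)/2) * n)"
    and h3: "(\<Prod>i<n. exp ((t * lam * \<alpha> i) * x i)) < exp (t * exp (- ln (1-e)/2) * exp (euler_mascheroni * (n * Max (\<alpha> ` {..<n}) - 1) / 2))"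
    and h4: "(\<Prod>i<n. x i powr (- (s * \<alpha> i))) < exp (- s * (ln (1-e)/2 - euler_mascheroni * (n * Max (\<alpha> ` {..<n}) + 1) / 2 - ln lam))"
  shows "(1 - \<epsilon>) * exp (- real n * Max (\<alpha> ` {..<n}) * euler_mascheroni)
              < (\<Prod>i<n. x i powr \<alpha> i) / (\<Sum>i<n. \<alpha> i * x i) \<and>
            (\<Prod>i<n. x i powr \<alpha> i) / (\<Sum>i<n. \<alpha> i * x i)
              < (1 + \<epsilon>) * exp (- real n * Min (\<alpha> ` {..<n}) * euler_mascheroni)"
proof -
  define g where "g = (euler_mascheroni :: real)"
  define M where "M = real n * Max (\<alpha> ` {..<n})"
  define c where "c = real n * Min (\<alpha> ` {..<n})"
  define S where "S = (\<Sum>i<n. ln (x i))"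
  define A where "A = (\<Sum>i<n. x i)"
  define L where "L = (\<Sum>i<n. \<alpha> i * ln (x i))"
  define D where "D = (\<Sum>i<n. \<alpha> i * x i)"
  have gpos: "g > 0" unfolding g_def by (rule euler_mascheroni_pos)
  have Ap: "A > 0" unfolding A_def using n xp by (intro sum_pos) auto
  have Dp: "D > 0" unfolding D_def using n xp ap by (intro sum_pos) auto
  have "Min (\<alpha> ` {..<n}) > 0" using n ap by (subst Min_gr_iff) auto
  hence cpos: "c > 0" unfolding c_def using n by simp
  have cle: "c \<le> 1"
  proof -
    have "(\<Sum>i<n. Min (\<alpha> ` {..<n})) \<le> (\<Sum>i<n. \<alpha> i)" by (intro sum_mono Min_le) auto
    thus ?thesis unfolding c_def using s1 by simp
  qed
  have Mge: "M \<ge> 1"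
  proof -
    have "(\<Sum>i<n. \<alpha> i) \<le> (\<Sum>i<n. Max (\<alpha> ` {..<n}))" by (intro sum_mono Max_ge) auto
    thus ?thesis unfolding M_def using s1 by simp
  qed
  have le1: "ln (1 + e) \<ge> 0" using e by simp
  have le2: "ln (1 - e) \<le> 0" using e by simp
  have "exp (\<sigma>1 * S) < exp (n * \<sigma>1 * (ln (1+e)/2 - g - ln lam))"
    using h1 unfolding S_def g_def by (simp add: prod_powr_pos[OF xp] sum_distrib_left)
  hence "\<sigma>1 * S < \<sigma>1 * (n * (ln (1+e)/2 - g - ln lam))" by (simp add: algebra_simps)
  hence "S < n * (ln (1+e)/2 - g - ln lam)" using pos by simp
  hence u1: "S / n < ln (1+e)/2 - g - ln lam" using n by (simp add: divide_less_eq mult.commute)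
  have "exp (- (\<tau>2 * lam) * A) < exp (- \<tau>2 * exp (- ln (1+e)/2) * n)"
    using h2 unfolding A_def by (simp add: exp_sum[symmetric] sum_distrib_left)
  hence "\<tau>2 * (exp (- ln (1+e)/2) * n) < \<tau>2 * (lam * A)" by (simp add: algebra_simps)
  hence "exp (- ln (1+e)/2) * n < lam * A" using pos by simp
  hence "exp (- ln (1+e)/2) < lam * (A / n)" using n by (simp add: field_simps)
  hence "ln (exp (- ln (1+e)/2)) < ln (lam * (A / n))" using lam Ap n by (subst ln_less_cancel_iff) auto
  moreover have "ln (lam * (A / n)) = ln lam + ln (A / n)" using lam Ap n by (intro ln_mult_pos) auto
  ultimately have u2: "- ln (1+e)/2 < ln lam + ln (A / n)" by simp
  have "(\<Prod>i<n. x i powr \<alpha> i) / D \<le> exp (c * (S / n - ln (A / n)))"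
    using upper_pt[OF n ap xp s1] unfolding c_def S_def A_def D_def .
  also have "\<dots> < exp (c * (ln (1 + e) - g))"
    using u1 u2 cpos by simp
  also have "\<dots> \<le> exp (ln (1 + e) - c * g)"
  proof -
    have "c * ln (1 + e) \<le> 1 * ln (1 + e)" using cle le1 by (intro mult_right_mono) auto
    thus ?thesis by (simp add: algebra_simps)
  qed
  also have "\<dots> = (1 + e) * exp (- c * g)" using e by (simp add: exp_diff exp_minus field_simps)
  also have "\<dots> \<le> (1 + \<epsilon>) * exp (- c * g)" using e by (intro mult_right_mono) auto
  finally have upper: "(\<Prod>i<n. x i powr \<alpha> i) / D < (1 + \<epsilon>) * exp (- c * g)" .
  have "exp (t * lam * D) < exp (t * exp (- ln (1-e)/2) * exp (g * (M - 1) / 2))"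
    using h3 unfolding D_def M_def g_def by (simp add: exp_sum[symmetric] sum_distrib_left mult.assoc)
  hence "t * (lam * D) < t * (exp (- ln (1-e)/2) * exp (g * (M - 1) / 2))" by (simp add: algebra_simps)
  hence "lam * D < exp (- ln (1-e)/2) * exp (g * (M - 1) / 2)" using pos by simp
  hence "lam * D < exp (- ln (1-e)/2 + g * (M - 1) / 2)" by (simp only: exp_add)
  hence "ln (lam * D) < - ln (1-e)/2 + g * (M - 1) / 2" using lam Dp
    by (metis ln_exp ln_less_cancel_iff exp_gt_zero mult_pos_pos)
  moreover have "ln (lam * D) = ln lam + ln D" using lam Dp by (intro ln_mult_pos) auto
  ultimately have l1: "ln D < - ln (1-e)/2 + g * (M - 1) / 2 - ln lam" by simp
  have "exp (- s * L) < exp (- s * (ln (1-e)/2 - g * (M + 1) / 2 - ln lam))"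
    using h4 unfolding L_def M_def g_def by (simp add: prod_powr_pos[OF xp] sum_distrib_left mult.assoc)
  hence "- s * L < - s * (ln (1-e)/2 - g * (M + 1) / 2 - ln lam)" by (simp only: exp_less_cancel_iff)
  hence "s * (ln (1-e)/2 - g * (M + 1) / 2 - ln lam) < s * L" by linarith
  hence l2: "ln (1-e)/2 - g * (M + 1) / 2 - ln lam < L" using pos by simp
  have "(1 - \<epsilon>) * exp (- M * g) \<le> (1 - e) * exp (- M * g)" using e by (intro mult_right_mono) auto
  also have "\<dots> = exp (ln (1 - e) - M * g)" using e by (simp add: exp_diff exp_minus field_simps)
  also have "\<dots> < exp (L - ln D)"
  proof -
    have "ln (1 - e) - M * g < L - ln D" using l1 l2 by (simp add: field_simps)
    thus ?thesis by simp
  qed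
  also have "\<dots> = (\<Prod>i<n. x i powr \<alpha> i) / D"
    using Dp unfolding L_def by (simp add: prod_powr_pos[OF xp] exp_diff)
  finally have lower: "(1 - \<epsilon>) * exp (- M * g) < (\<Prod>i<n. x i powr \<alpha> i) / D" .
  show ?thesis using upper lower unfolding M_def c_def g_def D_def by (simp add: mult.assoc)
qed



lemma bnd1:
  fixes lam e \<sigma>1 :: real and n :: nat
  assumes lam: "lam > 0" and s: "\<sigma>1 > 0" and G: "Gamma (1 + \<sigma>1) \<le> exp ((- euler_mascheroni + ln (1+e)/4) * \<sigma>1)"
  shows "(\<Prod>i<n. Gamma (\<sigma>1 + 1) / lam powr \<sigma>1) / exp (n * \<sigma>1 * (ln (1+e)/2 - euler_mascheroni - ln lam))
     \<le> exp (- (\<sigma>1 * (ln (1+e)/4)) * n)"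
proof -
  define q where "q = (- euler_mascheroni + ln (1+e)/4) * \<sigma>1 - \<sigma>1 * ln lam"
  have r: "Gamma (\<sigma>1 + 1) / lam powr \<sigma>1 \<le> exp q"
  proof -
    have "Gamma (\<sigma>1 + 1) / lam powr \<sigma>1 = Gamma (1 + \<sigma>1) / exp (\<sigma>1 * ln lam)"
      using lam by (simp add: powr_def add.commute)
    also have "\<dots> \<le> exp ((- euler_mascheroni + ln (1+e)/4) * \<sigma>1) / exp (\<sigma>1 * ln lam)"
      using G by (intro divide_right_mono) auto
    also have "\<dots> = exp q" unfolding q_def by (simp add: exp_diff)
    finally show ?thesis .
  qed
  have r0: "Gamma (\<sigma>1 + 1) / lam powr \<sigma>1 \<ge> 0" using s lam by simp
  have "(\<Prod>i<n. Gamma (\<sigma>1 + 1) / lam powr \<sigma>1) = (Gamma (\<sigma>1 + 1) / lam powr \<sigma>1) ^ n" by simp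
  also have "\<dots> \<le> exp q ^ n" using r r0 by (intro power_mono) auto
  also have "\<dots> = exp (n * q)" by (simp add: exp_of_nat_mult)
  finally have P: "(\<Prod>i<n. Gamma (\<sigma>1 + 1) / lam powr \<sigma>1) \<le> exp (n * q)" .
  have "(\<Prod>i<n. Gamma (\<sigma>1 + 1) / lam powr \<sigma>1) / exp (n * \<sigma>1 * (ln (1+e)/2 - euler_mascheroni - ln lam))
      \<le> exp (n * q) / exp (n * \<sigma>1 * (ln (1+e)/2 - euler_mascheroni - ln lam))"
    using P by (intro divide_right_mono) auto
  also have "\<dots> = exp (- (\<sigma>1 * (ln (1+e)/4)) * n)"
    unfolding q_def exp_diff[symmetric] by (simp add: field_simps)
  finally show ?thesis .
qed

lemma bnd2:
  fixes lam \<beta> \<tau>2 :: real and n :: nat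
  assumes lam: "lam > 0" and t: "\<tau>2 > 0" and G: "exp (\<tau>2 * \<beta>) / (1 + \<tau>2) \<le> exp (- ((1 - \<beta>) / 2) * \<tau>2)"
  shows "(\<Prod>i<n. lam / (lam - - (\<tau>2 * lam))) / exp (- \<tau>2 * \<beta> * n) \<le> exp (- (\<tau>2 * (1 - \<beta>) / 2) * n)"
proof -
  have "lam + \<tau>2 * lam > 0" using lam t by (simp add: add_pos_pos)
  hence e: "lam / (lam - - (\<tau>2 * lam)) = 1 / (1 + \<tau>2)" using lam t by (simp add: field_simps)
  have "(\<Prod>i<n. lam / (lam - - (\<tau>2 * lam))) / exp (- \<tau>2 * \<beta> * n) = (exp (\<tau>2 * \<beta>) / (1 + \<tau>2)) ^ n"
    unfolding e by (simp add: power_divide exp_of_nat_mult[symmetric] exp_minus field_simps)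
  also have "\<dots> \<le> exp (- ((1 - \<beta>) / 2) * \<tau>2) ^ n" using G t by (intro power_mono) auto
  also have "\<dots> = exp (- (\<tau>2 * (1 - \<beta>) / 2) * n)" by (simp add: exp_of_nat_mult[symmetric] field_simps)
  finally show ?thesis .
qed



lemma prod_exp_le:
  fixes n :: nat and f g :: "nat \<Rightarrow> real"
  assumes "\<And>i. i < n \<Longrightarrow> 0 \<le> f i \<and> f i \<le> exp (g i)"
  shows "(\<Prod>i<n. f i) \<le> exp (\<Sum>i<n. g i)"
proof -
  have "(\<Prod>i<n. f i) \<le> (\<Prod>i<n. exp (g i))" using assms by (intro prod_mono) auto
  also have "\<dots> = exp (\<Sum>i<n. g i)" by (rule exp_sum[symmetric]) simp
  finally show ?thesis .
qed

lemma key_lin: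
  fixes d g M m :: real
  assumes "d > 0" "g > 0" "M \<ge> 1" "m = min d (g/2)"
  shows "m * M \<le> d + g * (M - 1) / 2"
proof -
  have "m * M = m + m * (M - 1)" by (simp add: algebra_simps)
  also have "\<dots> \<le> d + (g/2) * (M - 1)" using assms by (intro add_mono mult_right_mono) auto
  finally show ?thesis by simp
qed

lemma bnd3:
  fixes lam t \<tau>3 \<delta>3 B M g :: real and \<alpha> :: "nat \<Rightarrow> real" and n :: nat
  assumes lam: "lam > 0" and t: "t > 0" and d: "\<delta>3 > 0" and tau: "\<tau>3 = \<delta>3 / (1 + \<delta>3)"
    and B: "B = 1 + 2 * \<delta>3" and g: "g > 0" and M: "M \<ge> 1" and tdef: "t * M = \<tau>3 * n"
    and a: "\<And>i. i < n \<Longrightarrow> \<alpha> i \<ge> 0 \<and> t * \<alpha> i \<le> \<tau>3" and s1: "(\<Sum>i<n. \<alpha> i) = 1"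
  shows "(\<Prod>i<n. lam / (lam - t * lam * \<alpha> i)) / exp (t * B * exp (g * (M - 1) / 2))
     \<le> exp (- (\<tau>3 * min \<delta>3 (g/2)) * n)"
proof -
  have tau1: "\<tau>3 < 1" "1 - \<tau>3 = 1 / (1 + \<delta>3)" using d unfolding tau by (auto simp: field_simps)
  have f: "0 \<le> lam / (lam - t * lam * \<alpha> i) \<and> lam / (lam - t * lam * \<alpha> i) \<le> exp (t * \<alpha> i * (1 + \<delta>3))"
    if i: "i < n" for i
  proof -
    have ai: "0 \<le> t * \<alpha> i" "t * \<alpha> i \<le> \<tau>3" using a[OF i] t by auto
    have pos: "1 - t * \<alpha> i > 0" using ai tau1 by simp
    have dpos: "lam - t * lam * \<alpha> i > 0"
    proof -
      have "lam - t * lam * \<alpha> i = lam * (1 - t * \<alpha> i)" by (simp add: algebra_simps)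
      thus ?thesis using lam pos by simp
    qed
    have "lam / (lam - t * lam * \<alpha> i) = 1 / (1 - t * \<alpha> i)"
    proof -
      have "lam - t * lam * \<alpha> i = lam * (1 - t * \<alpha> i)" by (simp add: algebra_simps)
      thus ?thesis using lam pos by simp
    qed
    also have "\<dots> \<le> exp (t * \<alpha> i / (1 - \<tau>3))" by (rule inv_one_minus) (use ai tau1 in auto)
    also have "t * \<alpha> i / (1 - \<tau>3) = t * \<alpha> i * (1 + \<delta>3)" by (subst tau1(2)) simp
    finally show ?thesis using dpos lam by simp
  qed
  have P: "(\<Prod>i<n. lam / (lam - t * lam * \<alpha> i)) \<le> exp (t * (1 + \<delta>3))"
  proof -
    have "(\<Prod>i<n. lam / (lam - t * lam * \<alpha> i)) \<le> exp (\<Sum>i<n. t * \<alpha> i * (1 + \<delta>3))"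
      by (rule prod_exp_le) (use f in auto)
    also have "(\<Sum>i<n. t * \<alpha> i * (1 + \<delta>3)) = t * (1 + \<delta>3)"
      using s1 by (simp add: sum_distrib_left[symmetric] sum_distrib_right[symmetric] mult.assoc[symmetric])
    finally show ?thesis .
  qed
  have E: "B * exp (g * (M - 1) / 2) \<ge> B + g * (M - 1) / 2"
  proof -
    have "exp (g * (M - 1) / 2) \<ge> 1 + g * (M - 1) / 2" by (rule exp_ge_add_one_self)
    hence "B * exp (g * (M - 1) / 2) \<ge> B * (1 + g * (M - 1) / 2)" using B d by (intro mult_left_mono) auto
    moreover have "B * (1 + g * (M - 1) / 2) \<ge> B + g * (M - 1) / 2"
    proof -
      have "g * (M - 1) / 2 \<ge> 0" using g M by simp
      hence "B * (g * (M - 1) / 2) \<ge> 1 * (g * (M - 1) / 2)" using B d by (intro mult_right_mono) auto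
      thus ?thesis by (simp add: algebra_simps)
    qed
    ultimately show ?thesis by linarith
  qed
  have K: "min \<delta>3 (g/2) * M \<le> \<delta>3 + g * (M - 1) / 2" by (rule key_lin) (use d g M in auto)
  have "(\<Prod>i<n. lam / (lam - t * lam * \<alpha> i)) / exp (t * B * exp (g * (M - 1) / 2))
      \<le> exp (t * (1 + \<delta>3)) / exp (t * B * exp (g * (M - 1) / 2))"
    using P by (intro divide_right_mono) auto
  also have "\<dots> = exp (t * (1 + \<delta>3) - t * (B * exp (g * (M - 1) / 2)))" by (simp add: exp_diff mult.assoc)
  also have "\<dots> \<le> exp (- (t * (min \<delta>3 (g/2) * M)))"
  proof -
    have "t * (B * exp (g * (M - 1) / 2)) \<ge> t * (B + g * (M - 1) / 2)" using E t by (intro mult_left_mono) auto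
    moreover have "t * (min \<delta>3 (g/2) * M) \<le> t * (\<delta>3 + g * (M - 1) / 2)" using K t by (intro mult_left_mono) auto
    ultimately have "t * (1 + \<delta>3) - t * (B * exp (g * (M - 1) / 2)) \<le> - (t * (min \<delta>3 (g/2) * M))"
      using B by (simp add: algebra_simps)
    thus ?thesis by simp
  qed
  also have "t * (min \<delta>3 (g/2) * M) = \<tau>3 * min \<delta>3 (g/2) * n"
    using tdef by (metis mult.assoc mult.commute)
  finally show ?thesis by simp
qed

lemma bnd4:
  fixes lam s \<sigma>4 \<delta>4 e M g :: real and \<alpha> :: "nat \<Rightarrow> real" and n :: nat
  assumes lam: "lam > 0" and s: "s > 0" and d: "\<delta>4 > 0" and le: "ln (1 - e) = - 4 * \<delta>4"
    and g: "g > 0" and M: "M \<ge> 1" and sdef: "s * M = \<sigma>4 * n" and s4: "\<sigma>4 \<le> 1/2"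
    and a: "\<And>i. i < n \<Longrightarrow> \<alpha> i \<ge> 0 \<and> s * \<alpha> i \<le> \<sigma>4" and s1: "(\<Sum>i<n. \<alpha> i) = 1"
    and G: "\<forall>u. 0 \<le> u \<and> u \<le> \<sigma>4 \<longrightarrow> Gamma (1 - u) \<le> exp ((g + \<delta>4) * u)"
  shows "(\<Prod>i<n. Gamma (- (s * \<alpha> i) + 1) / lam powr (- (s * \<alpha> i))) / exp (- s * (ln (1 - e) / 2 - g * (M + 1) / 2 - ln lam))
     \<le> exp (- (\<sigma>4 * min \<delta>4 (g/2)) * n)"
proof -
  have f: "0 \<le> Gamma (- (s * \<alpha> i) + 1) / lam powr (- (s * \<alpha> i)) \<and>
      Gamma (- (s * \<alpha> i) + 1) / lam powr (- (s * \<alpha> i)) \<le> exp (s * \<alpha> i * (g + \<delta>4 + ln lam))"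
    if i: "i < n" for i
  proof -
    have ai: "0 \<le> s * \<alpha> i" "s * \<alpha> i \<le> \<sigma>4" using a[OF i] s by auto
    have "Gamma (- (s * \<alpha> i) + 1) / lam powr (- (s * \<alpha> i)) = Gamma (1 - s * \<alpha> i) * exp (s * \<alpha> i * ln lam)"
      using lam by (simp add: powr_def exp_minus field_simps)
    also have "\<dots> \<le> exp ((g + \<delta>4) * (s * \<alpha> i)) * exp (s * \<alpha> i * ln lam)"
      using G ai by (intro mult_right_mono) auto
    also have "\<dots> = exp (s * \<alpha> i * (g + \<delta>4 + ln lam))" by (simp add: exp_add[symmetric] algebra_simps)
    finally have "Gamma (- (s * \<alpha> i) + 1) / lam powr (- (s * \<alpha> i)) \<le> exp (s * \<alpha> i * (g + \<delta>4 + ln lam))" .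
    moreover have "Gamma (- (s * \<alpha> i) + 1) \<ge> 0"
    proof -
      have "- (s * \<alpha> i) + 1 > 0" using ai s4 by simp
      thus ?thesis by (intro less_imp_le Gamma_real_pos)
    qed
    ultimately show ?thesis by simp
  qed
  have P: "(\<Prod>i<n. Gamma (- (s * \<alpha> i) + 1) / lam powr (- (s * \<alpha> i))) \<le> exp (s * (g + \<delta>4 + ln lam))"
  proof -
    have "(\<Prod>i<n. Gamma (- (s * \<alpha> i) + 1) / lam powr (- (s * \<alpha> i))) \<le> exp (\<Sum>i<n. s * \<alpha> i * (g + \<delta>4 + ln lam))"
      by (rule prod_exp_le) (use f in auto)
    also have "(\<Sum>i<n. s * \<alpha> i * (g + \<delta>4 + ln lam)) = s * (g + \<delta>4 + ln lam)"
      using s1 by (simp add: sum_distrib_left[symmetric] sum_distrib_right[symmetric] mult.assoc[symmetric])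
    finally show ?thesis .
  qed
  have K: "min \<delta>4 (g/2) * M \<le> \<delta>4 + g * (M - 1) / 2" by (rule key_lin) (use d g M in auto)
  have "(\<Prod>i<n. Gamma (- (s * \<alpha> i) + 1) / lam powr (- (s * \<alpha> i))) / exp (- s * (ln (1 - e) / 2 - g * (M + 1) / 2 - ln lam))
     \<le> exp (s * (g + \<delta>4 + ln lam)) / exp (- s * (ln (1 - e) / 2 - g * (M + 1) / 2 - ln lam))"
    using P by (intro divide_right_mono) auto
  also have "\<dots> = exp (- (s * (\<delta>4 + g * (M - 1) / 2)))"
    unfolding exp_diff[symmetric] le by (simp add: field_simps)
  also have "\<dots> \<le> exp (- (s * (min \<delta>4 (g/2) * M)))"
    using K s by simp
  also have "s * (min \<delta>4 (g/2) * M) = \<sigma>4 * min \<delta>4 (g/2) * n"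
    using sdef by (metis mult.assoc mult.commute)
  finally show ?thesis by simp
qed



lemma not_ev:
  fixes f :: "nat \<Rightarrow> real" and n :: nat
  assumes "\<And>i. i < n \<Longrightarrow> 0 \<le> f i" "\<not> (ennreal a \<le> (\<Prod>i<n. ennreal (f i)))"
  shows "(\<Prod>i<n. f i) < a"
proof (rule ccontr)
  assume "\<not> (\<Prod>i<n. f i) < a"
  hence "ennreal a \<le> ennreal (\<Prod>i<n. f i)" by (intro ennreal_leI) auto
  also have "ennreal (\<Prod>i<n. f i) = (\<Prod>i<n. ennreal (f i))" using assms(1) by (intro prod_ennreal[symmetric]) auto
  finally show False using assms(2) by simp
qed

lemma main_bound:
  fixes e \<epsilon> lam \<sigma>1 \<tau>2 \<sigma>4 :: real and n :: nat and \<alpha> :: "nat \<Rightarrow> real"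
  defines "\<beta> \<equiv> exp (- ln (1+e)/2)"
    and "\<delta>3 \<equiv> (exp (- ln (1-e)/2) - 1) / 2"
    and "\<tau>3 \<equiv> ((exp (- ln (1-e)/2) - 1) / 2) / (1 + (exp (- ln (1-e)/2) - 1) / 2)"
    and "\<delta>4 \<equiv> - ln (1-e) / 4"
  assumes n: "n > 0" and ap: "\<forall>i<n. \<alpha> i > 0" and s1: "(\<Sum>i<n. \<alpha> i) = 1" and lam: "lam > 0"
    and e: "0 < e" "e \<le> 1/2" "e \<le> \<epsilon>"
    and S1: "0 < \<sigma>1" "Gamma (1 + \<sigma>1) \<le> exp ((- euler_mascheroni + ln (1+e)/4) * \<sigma>1)"
    and T2: "0 < \<tau>2" "exp (\<tau>2 * \<beta>) / (1 + \<tau>2) \<le> exp (- ((1 - \<beta>) / 2) * \<tau>2)"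
    and S4: "0 < \<sigma>4" "\<sigma>4 \<le> 1/2" "\<forall>u. 0 \<le> u \<and> u \<le> \<sigma>4 \<longrightarrow> Gamma (1 - u) \<le> exp ((euler_mascheroni + \<delta>4) * u)"
  shows "measure (P_exp lam n)
         {x \<in> space (P_exp lam n).
            (1 - \<epsilon>) * exp (- real n * Max (\<alpha> ` {..<n}) * euler_mascheroni)
              < (\<Prod>i<n. x i powr \<alpha> i) / (\<Sum>i<n. \<alpha> i * x i) \<and>
            (\<Prod>i<n. x i powr \<alpha> i) / (\<Sum>i<n. \<alpha> i * x i)
              < (1 + \<epsilon>) * exp (- real n * Min (\<alpha> ` {..<n}) * euler_mascheroni)}
       \<ge> 1 - (exp (- (\<sigma>1 * (ln (1+e)/4)) * n) + exp (- (\<tau>2 * (1 - \<beta>) / 2) * n)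
              + exp (- (\<tau>3 * min \<delta>3 (euler_mascheroni/2)) * n) + exp (- (\<sigma>4 * min \<delta>4 (euler_mascheroni/2)) * n))"
proof -
  define g where "g = (euler_mascheroni :: real)"
  have gpos: "g > 0" unfolding g_def by (rule euler_mascheroni_pos)
  define Mx where "Mx = Max (\<alpha> ` {..<n})"
  define M where "M = real n * Mx"
  have ale: "\<alpha> i \<le> Mx" if "i < n" for i unfolding Mx_def using that by (intro Max_ge) auto
  have Mge: "M \<ge> 1"
  proof -
    have "(\<Sum>i<n. \<alpha> i) \<le> (\<Sum>i<n. Mx)" using ale by (intro sum_mono) auto
    thus ?thesis unfolding M_def using s1 by simp
  qed
  have nal: "real n * \<alpha> i \<le> M" if "i < n" for i unfolding M_def using ale[OF that] by (intro mult_left_mono) auto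
  have B: "exp (- ln (1-e)/2) = 1 + 2 * \<delta>3" unfolding \<delta>3_def by (simp add: field_simps)
  have d3: "\<delta>3 > 0"
  proof -
    have "ln (1 - e) < 0" using e by simp
    hence "exp (- ln (1-e)/2) > exp 0" by (subst exp_less_cancel_iff) simp
    thus ?thesis unfolding \<delta>3_def by simp
  qed
  have tau3: "\<tau>3 = \<delta>3 / (1 + \<delta>3)" unfolding \<tau>3_def \<delta>3_def ..
  have t3pos: "\<tau>3 > 0" using d3 tau3 by simp
  have t3lt: "\<tau>3 < 1" unfolding tau3 using d3 by (simp add: divide_less_eq)
  have d4: "\<delta>4 > 0" unfolding \<delta>4_def using e by simp
  define t where "t = \<tau>3 * n / M"
  define s where "s = \<sigma>4 * n / M"
  have tpos: "t > 0" unfolding t_def using t3pos n Mge by simp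
  have spos: "s > 0" unfolding s_def using S4 n Mge by simp
  have tM: "t * M = \<tau>3 * n" unfolding t_def using Mge by simp
  have sM: "s * M = \<sigma>4 * n" unfolding s_def using Mge by simp
  have ta: "\<alpha> i \<ge> 0 \<and> t * \<alpha> i \<le> \<tau>3" if "i < n" for i
  proof -
    have "t * \<alpha> i = \<tau>3 * (real n * \<alpha> i) / M" unfolding t_def by simp
    also have "\<dots> \<le> \<tau>3 * M / M" using nal[OF that] t3pos Mge by (intro divide_right_mono mult_left_mono) auto
    finally show ?thesis using ap that Mge by auto
  qed
  have sa: "\<alpha> i \<ge> 0 \<and> s * \<alpha> i \<le> \<sigma>4" if "i < n" for i
  proof -
    have "s * \<alpha> i = \<sigma>4 * (real n * \<alpha> i) / M" unfolding s_def by simp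
    also have "\<dots> \<le> \<sigma>4 * M / M" using nal[OF that] S4 Mge by (intro divide_right_mono mult_left_mono) auto
    finally show ?thesis using ap that Mge by auto
  qed
  define P where "P = P_exp lam n"
  define a1 where "a1 = exp (n * \<sigma>1 * (ln (1+e)/2 - euler_mascheroni - ln lam))"
  define a2 where "a2 = exp (- \<tau>2 * exp (- ln (1+e)/2) * n)"
  define a3 where "a3 = exp (t * exp (- ln (1-e)/2) * exp (euler_mascheroni * (n * Max (\<alpha> ` {..<n}) - 1) / 2))"
  define a4 where "a4 = exp (- s * (ln (1-e)/2 - euler_mascheroni * (n * Max (\<alpha> ` {..<n}) + 1) / 2 - ln lam))"
  define E0 where "E0 = {x\<in>space P. \<exists>i<n. x i \<le> 0}"
  define E1 where "E1 = {x\<in>space P. ennreal a1 \<le> (\<Prod>i<n. ennreal (x i powr \<sigma>1))}"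
  define E2 where "E2 = {x\<in>space P. ennreal a2 \<le> (\<Prod>i<n. ennreal (exp (- (\<tau>2 * lam) * x i)))}"
  define E3 where "E3 = {x\<in>space P. ennreal a3 \<le> (\<Prod>i<n. ennreal (exp ((t * lam * \<alpha> i) * x i)))}"
  define E4 where "E4 = {x\<in>space P. ennreal a4 \<le> (\<Prod>i<n. ennreal (x i powr (- (s * \<alpha> i))))}"
  define G where "G = {x \<in> space P.
            (1 - \<epsilon>) * exp (- real n * Max (\<alpha> ` {..<n}) * euler_mascheroni)
              < (\<Prod>i<n. x i powr \<alpha> i) / (\<Sum>i<n. \<alpha> i * x i) \<and>
            (\<Prod>i<n. x i powr \<alpha> i) / (\<Sum>i<n. \<alpha> i * x i)
              < (1 + \<epsilon>) * exp (- real n * Min (\<alpha> ` {..<n}) * euler_mascheroni)}"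
  have m0: "measure P E0 = 0" unfolding E0_def P_def by (rule null_event[OF lam])
  have m1: "measure P E1 \<le> exp (- (\<sigma>1 * (ln (1+e)/4)) * n)"
  proof -
    have "measure P E1 \<le> (\<Prod>i<n. Gamma (\<sigma>1 + 1) / lam powr \<sigma>1) / a1"
      unfolding E1_def P_def
      by (rule markov_prod[OF lam, of "\<lambda>i t. ennreal (t powr \<sigma>1)"]) (use S1 lam in \<open>auto simp: a1_def int_pow\<close>)
    also have "\<dots> \<le> exp (- (\<sigma>1 * (ln (1+e)/4)) * n)"
      unfolding a1_def by (rule bnd1[OF lam S1])
    finally show ?thesis .
  qed
  have m2: "measure P E2 \<le> exp (- (\<tau>2 * (1 - \<beta>) / 2) * n)"
  proof -
    have "measure P E2 \<le> (\<Prod>i<n. lam / (lam - - (\<tau>2 * lam))) / a2"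
      unfolding E2_def P_def
    proof (rule markov_prod[OF lam, of "\<lambda>i t. ennreal (exp (- (\<tau>2 * lam) * t))"])
      have lt: "- (\<tau>2 * lam) < lam" using T2 lam by (smt (verit) mult_pos_pos)
      show "(\<integral>\<^sup>+u. edens lam u * ennreal (exp (- (\<tau>2 * lam) * u)) \<partial>lborel) = ennreal (lam / (lam - - (\<tau>2 * lam)))"
        for i by (rule int_exp[OF lam lt])
      show "0 \<le> lam / (lam - - (\<tau>2 * lam))" for i using lam lt by simp
    qed (auto simp: a2_def)
    also have "\<dots> \<le> exp (- (\<tau>2 * (1 - \<beta>) / 2) * n)"
      unfolding a2_def \<beta>_def[symmetric] by (rule bnd2[OF lam T2(1)]) (use T2 in simp)
    finally show ?thesis .
  qed
  have m3: "measure P E3 \<le> exp (- (\<tau>3 * min \<delta>3 (euler_mascheroni/2)) * n)"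
  proof -
    have "measure P E3 \<le> (\<Prod>i<n. lam / (lam - t * lam * \<alpha> i)) / a3"
      unfolding E3_def P_def
    proof (rule markov_prod[OF lam, of "\<lambda>i u. ennreal (exp ((t * lam * \<alpha> i) * u))"])
      fix i assume i: "i < n"
      have "t * \<alpha> i < 1" using ta[OF i] t3lt by linarith
      hence lt: "t * lam * \<alpha> i < lam" using lam by (simp add: mult.commute mult.left_commute)
      show "(\<integral>\<^sup>+u. edens lam u * ennreal (exp (t * lam * \<alpha> i * u)) \<partial>lborel) = ennreal (lam / (lam - t * lam * \<alpha> i))"
        by (rule int_exp[OF lam lt])
      show "0 \<le> lam / (lam - t * lam * \<alpha> i)" using lam lt by simp
    qed (auto simp: a3_def)
    also have "\<dots> \<le> exp (- (\<tau>3 * min \<delta>3 (euler_mascheroni/2)) * n)"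
      using bnd3[OF lam tpos d3 tau3 B gpos Mge tM ta s1] unfolding a3_def M_def Mx_def g_def by simp
    finally show ?thesis .
  qed
  have m4: "measure P E4 \<le> exp (- (\<sigma>4 * min \<delta>4 (euler_mascheroni/2)) * n)"
  proof -
    have "measure P E4 \<le> (\<Prod>i<n. Gamma (- (s * \<alpha> i) + 1) / lam powr (- (s * \<alpha> i))) / a4"
      unfolding E4_def P_def
    proof (rule markov_prod[OF lam, of "\<lambda>i u. ennreal (u powr (- (s * \<alpha> i)))"])
      fix i assume i: "i < n"
      have p: "- (s * \<alpha> i) > -1" using sa[OF i] S4(2) by simp
      show "(\<integral>\<^sup>+u. edens lam u * ennreal (u powr (- (s * \<alpha> i))) \<partial>lborel)
          = ennreal (Gamma (- (s * \<alpha> i) + 1) / lam powr (- (s * \<alpha> i)))"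
        by (rule int_pow[OF p lam])
      have "- (s * \<alpha> i) + 1 > 0" using p by simp
      thus "0 \<le> Gamma (- (s * \<alpha> i) + 1) / lam powr (- (s * \<alpha> i))"
        using lam by (intro divide_nonneg_nonneg less_imp_le[OF Gamma_real_pos]) auto
    qed (auto simp: a4_def)
    also have "\<dots> \<le> exp (- (\<sigma>4 * min \<delta>4 (euler_mascheroni/2)) * n)"
    proof -
      have le: "ln (1 - e) = - 4 * \<delta>4" unfolding \<delta>4_def by simp
      have GG: "\<forall>u. 0 \<le> u \<and> u \<le> \<sigma>4 \<longrightarrow> Gamma (1 - u) \<le> exp ((g + \<delta>4) * u)"
        using S4(3) unfolding g_def .
      show ?thesis
        using bnd4[OF lam spos d4 le gpos Mge sM S4(2) sa s1 GG] unfolding a4_def M_def Mx_def g_def by simp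
    qed
    finally show ?thesis .
  qed
  have incl: "space P - G \<subseteq> E0 \<union> E1 \<union> E2 \<union> E3 \<union> E4"
  proof
    fix x assume x: "x \<in> space P - G"
    show "x \<in> E0 \<union> E1 \<union> E2 \<union> E3 \<union> E4"
    proof (rule ccontr)
      assume nx: "x \<notin> E0 \<union> E1 \<union> E2 \<union> E3 \<union> E4"
      have xp: "\<And>i. i < n \<Longrightarrow> x i > 0" using nx x unfolding E0_def by force
      have h1: "(\<Prod>i<n. x i powr \<sigma>1) < a1"
        by (rule not_ev) (use nx x in \<open>auto simp: E1_def\<close>)
      have h2: "(\<Prod>i<n. exp (- (\<tau>2 * lam) * x i)) < a2"
        by (rule not_ev) (use nx x in \<open>auto simp: E2_def\<close>)
      have h3: "(\<Prod>i<n. exp ((t * lam * \<alpha> i) * x i)) < a3"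
        by (rule not_ev) (use nx x in \<open>auto simp: E3_def\<close>)
      have h4: "(\<Prod>i<n. x i powr (- (s * \<alpha> i))) < a4"
        by (rule not_ev) (use nx x in \<open>auto simp: E4_def\<close>)
      have "(1 - \<epsilon>) * exp (- real n * Max (\<alpha> ` {..<n}) * euler_mascheroni)
              < (\<Prod>i<n. x i powr \<alpha> i) / (\<Sum>i<n. \<alpha> i * x i) \<and>
            (\<Prod>i<n. x i powr \<alpha> i) / (\<Sum>i<n. \<alpha> i * x i)
              < (1 + \<epsilon>) * exp (- real n * Min (\<alpha> ` {..<n}) * euler_mascheroni)"
        by (rule pt_good[OF n _ xp s1 lam e S1(1) T2(1) tpos spos h1[unfolded a1_def] h2[unfolded a2_def]
              h3[unfolded a3_def] h4[unfolded a4_def]]) (use ap in auto)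
      thus False using x unfolding G_def by auto
    qed
  qed
  interpret finite_measure P unfolding P_def by (rule fin_P[OF lam])
  have sp: "measure P (space P) = 1" unfolding P_def measure_def by (simp add: emeasure_P_space[OF lam])
  have Gs: "G \<in> sets P" unfolding G_def P_def by measurable
  have Es: "E0 \<in> sets P" "E1 \<in> sets P" "E2 \<in> sets P" "E3 \<in> sets P" "E4 \<in> sets P"
    unfolding E0_def E1_def E2_def E3_def E4_def P_def by measurable
  have "measure P (space P - G) \<le> measure P (E0 \<union> E1 \<union> E2 \<union> E3 \<union> E4)"
    by (intro finite_measure_mono[OF incl]) (use Es in auto)
  also have "\<dots> \<le> measure P E0 + measure P E1 + measure P E2 + measure P E3 + measure P E4"
  proof -
    have u: "\<And>A B. A \<in> sets P \<Longrightarrow> B \<in> sets P \<Longrightarrow> measure P (A \<union> B) \<le> measure P A + measure P B"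
      by (rule measure_subadditive) auto
    have "measure P (E0 \<union> E1 \<union> E2 \<union> E3 \<union> E4) \<le> measure P (E0 \<union> E1 \<union> E2 \<union> E3) + measure P E4"
      using Es by (intro u) auto
    also have "measure P (E0 \<union> E1 \<union> E2 \<union> E3) \<le> measure P (E0 \<union> E1 \<union> E2) + measure P E3"
      using Es by (intro u) auto
    also have "measure P (E0 \<union> E1 \<union> E2) \<le> measure P (E0 \<union> E1) + measure P E2"
      using Es by (intro u) auto
    also have "measure P (E0 \<union> E1) \<le> measure P E0 + measure P E1"
      using Es by (intro u) auto
    finally show ?thesis by simp
  qed
  finally have "measure P (space P - G) \<le> measure P E0 + measure P E1 + measure P E2 + measure P E3 + measure P E4" .
  moreover have "measure P (space P - G) = 1 - measure P G" using finite_measure_compl[OF Gs] sp by simp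
  ultimately show ?thesis using m0 m1 m2 m3 m4 unfolding G_def P_def by simp
qed



theorem theorem4p4:
  fixes k \<epsilon> :: real
  assumes "k > 0" and "\<epsilon> > 0"
  shows "\<exists>N::nat. \<forall>n\<ge>N. n \<ge> 2 \<longrightarrow>
    (\<forall>(lam::real) (\<alpha>::nat \<Rightarrow> real).
       lam > 0 \<and> (\<forall>i<n. \<alpha> i > 0) \<and> (\<Sum>i<n. \<alpha> i) = 1 \<longrightarrow>
       measure (P_exp lam n)
         {x \<in> space (P_exp lam n).
            (1 - \<epsilon>) * exp (- real n * Max (\<alpha> ` {..<n}) * euler_mascheroni)
              < (\<Prod>i<n. x i powr \<alpha> i) / (\<Sum>i<n. \<alpha> i * x i) \<and>
            (\<Prod>i<n. x i powr \<alpha> i) / (\<Sum>i<n. \<alpha> i * x i)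
              < (1 + \<epsilon>) * exp (- real n * Min (\<alpha> ` {..<n}) * euler_mascheroni)}
       \<ge> 1 - 1 / real n powr k)"
proof -
  define e where "e = min \<epsilon> (1/2)"
  have e: "0 < e" "e \<le> 1/2" "e \<le> \<epsilon>" using assms unfolding e_def by auto
  define \<beta> where "\<beta> = exp (- ln (1+e)/2)"
  define \<delta>3 where "\<delta>3 = (exp (- ln (1-e)/2) - 1) / 2"
  define \<tau>3 where "\<tau>3 = ((exp (- ln (1-e)/2) - 1) / 2) / (1 + (exp (- ln (1-e)/2) - 1) / 2)"
  define \<delta>4 where "\<delta>4 = - ln (1-e) / 4"
  have l1: "ln (1 + e) > 0" using e by simp
  have l2: "ln (1 - e) < 0" using e by simp
  obtain \<sigma>1 where S1: "0 < \<sigma>1" "\<sigma>1 \<le> 1/2" "Gamma (1 + \<sigma>1) \<le> exp ((- euler_mascheroni + ln (1+e)/4) * \<sigma>1)"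
    using G1[of "ln (1+e)/4"] l1 by auto
  have b: "0 < \<beta>" "\<beta> < 1" unfolding \<beta>_def using l1 by auto
  obtain \<tau>2 where T2: "0 < \<tau>2" "\<tau>2 \<le> 1" "exp (\<tau>2 * \<beta>) / (1 + \<tau>2) \<le> exp (- ((1 - \<beta>) / 2) * \<tau>2)"
    using G3[OF b] by auto
  obtain \<sigma>4 where S4: "0 < \<sigma>4" "\<sigma>4 \<le> 1/2" "\<forall>u. 0 \<le> u \<and> u \<le> \<sigma>4 \<longrightarrow> Gamma (1 - u) \<le> exp ((euler_mascheroni + \<delta>4) * u)"
    using G2[of \<delta>4] l2 unfolding \<delta>4_def by auto
  have gpos: "euler_mascheroni > (0::real)" by (rule euler_mascheroni_pos)
  have d3: "\<delta>3 > 0"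
  proof -
    have "exp (- ln (1-e)/2) > exp 0" using l2 by (subst exp_less_cancel_iff) simp
    thus ?thesis unfolding \<delta>3_def by simp
  qed
  have "\<tau>3 = \<delta>3 / (1 + \<delta>3)" unfolding \<tau>3_def \<delta>3_def ..
  hence t3: "\<tau>3 > 0" using d3 by simp
  have d4: "\<delta>4 > 0" unfolding \<delta>4_def using l2 by simp
  define r1 where "r1 = \<sigma>1 * (ln (1+e)/4)"
  define r2 where "r2 = \<tau>2 * (1 - \<beta>) / 2"
  define r3 where "r3 = \<tau>3 * min \<delta>3 (euler_mascheroni/2)"
  define r4 where "r4 = \<sigma>4 * min \<delta>4 (euler_mascheroni/2)"
  define \<kappa> where "\<kappa> = min (min r1 r2) (min r3 r4)"
  have rpos: "r1 > 0" "r2 > 0" "r3 > 0" "r4 > 0"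
    unfolding r1_def r2_def r3_def r4_def using S1 l1 T2 b t3 d3 d4 gpos S4 by auto
  have kpos: "\<kappa> > 0" unfolding \<kappa>_def using rpos by auto
  have "eventually (\<lambda>n::nat. 4 * exp (- \<kappa> * real n) \<le> 1 / real n powr k) at_top"
    using kpos assms(1) by (rule asym)
  then obtain N where N: "\<And>n. n \<ge> N \<Longrightarrow> 4 * exp (- \<kappa> * real n) \<le> 1 / real n powr k"
    by (auto simp: eventually_at_top_linorder)
  show ?thesis
  proof (intro exI[of _ N] allI impI)
    fix n :: nat and lam :: real and \<alpha> :: "nat \<Rightarrow> real"
    assume nN: "n \<ge> N" and n2: "n \<ge> 2" and H: "lam > 0 \<and> (\<forall>i<n. \<alpha> i > 0) \<and> (\<Sum>i<n. \<alpha> i) = 1"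
    have n: "n > 0" using n2 by simp
    note mb = main_bound[OF n _ _ _ e S1(1,3) T2(1) T2(3)[unfolded \<beta>_def] S4(1,2) S4(3)[unfolded \<delta>4_def], of \<alpha> lam]
    have le: "exp (- r * real n) \<le> exp (- \<kappa> * real n)" if "r \<ge> \<kappa>" for r
      using that by (intro exp_mono mult_right_mono) auto
    have "exp (- r1 * real n) + exp (- r2 * real n) + exp (- r3 * real n) + exp (- r4 * real n) \<le> 4 * exp (- \<kappa> * real n)"
    proof -
      have "\<kappa> \<le> r1" "\<kappa> \<le> r2" "\<kappa> \<le> r3" "\<kappa> \<le> r4" unfolding \<kappa>_def by auto
      hence "exp (- r1 * real n) \<le> exp (- \<kappa> * real n)" "exp (- r2 * real n) \<le> exp (- \<kappa> * real n)"
        "exp (- r3 * real n) \<le> exp (- \<kappa> * real n)" "exp (- r4 * real n) \<le> exp (- \<kappa> * real n)"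
        using le by blast+
      thus ?thesis by linarith
    qed
    also have "\<dots> \<le> 1 / real n powr k" by (rule N[OF nN])
    finally have "exp (- r1 * real n) + exp (- r2 * real n) + exp (- r3 * real n) + exp (- r4 * real n) \<le> 1 / real n powr k" .
    thus "measure (P_exp lam n)
         {x \<in> space (P_exp lam n).
            (1 - \<epsilon>) * exp (- real n * Max (\<alpha> ` {..<n}) * euler_mascheroni)
              < (\<Prod>i<n. x i powr \<alpha> i) / (\<Sum>i<n. \<alpha> i * x i) \<and>
            (\<Prod>i<n. x i powr \<alpha> i) / (\<Sum>i<n. \<alpha> i * x i)
              < (1 + \<epsilon>) * exp (- real n * Min (\<alpha> ` {..<n}) * euler_mascheroni)}
       \<ge> 1 - 1 / real n powr k"
      using mb H unfolding r1_def r2_def r3_def r4_def \<beta>_def \<delta>3_def \<tau>3_def \<delta>4_def by auto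
  qed
qed

end
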